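(* Assume $K_1\subseteq K_2\subseteq\cdots\subseteq K_n\subseteq\mathbb F_q$ are subfields. Let $1\le h\le n$ and $p=\gamma_1X_1+\cdots+\gamma_hX_h+\eta\in\mathbb F_q[X_1,\dots,X_n]$ with $\gamma_1,\dots,\gamma_h,\eta\in\mathbb F_q$ and $\gamma_h\ne 0$, and let $j\in\{1,\dots,n\}$. Then there exists $\varphi\in\mathrm{Aff}(\mathcal X)$ with $X_j\circ\varphi=p$ if and only if $\gamma_i\in K_j$ for all $i\in\{1,\dots,h\}$, $\eta\in K_j$, and $K_h=K_j$.
   Context: $\mathcal X=K_1\times\cdots\times K_n\subseteq\mathbb F_q^n$. $\mathrm{Aff}(\mathbb F_q^n)$ is the group of maps $\boldsymbol\alpha\mapsto A\boldsymbol\alpha+\boldsymbol\beta$ with $A\in GL(n,\mathbb F_q)$, $\boldsymbol\beta\in\mathbb F_q^n$. $\mathrm{Aff}(\mathcal X)$ is the set of maps $\varphi:\mathcal X\to\mathcal X$ of the form $\varphi=\psi|_{\mathcal X}$ with $\psi\in\mathrm{Aff}(\mathbb F_q^n)$ and $\psi(\mathcal X)=\mathcal X$; such $\psi$ is unique. For $f\in\mathbb F_q[X_1,\dots,X_n]$ and $\varphi=\psi|_{\mathcal X}\in\mathrm{Aff}(\mathcal X)$, $f\circ\varphi$ is the polynomial $f(\psi(X_1,\dots,X_n))$, where $(X_1,\dots,X_n)$ is viewed as a column vector. *)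

theory Defs
  imports Main
begin

text \<open>The ambient finite field F_q is a type of class field and finite.
Vectors of F_q^n are functions nat to 'a, indexed by 1..n, and zero outside 1..n.\<close>

definition is_subfield :: "'a::field set \<Rightarrow> bool" where
  "is_subfield K \<longleftrightarrow> 0 \<in> K \<and> 1 \<in> K \<and>
     (\<forall>x\<in>K. \<forall>y\<in>K. x + y \<in> K \<and> x * y \<in> K) \<and>
     (\<forall>x\<in>K. - x \<in> K) \<and> (\<forall>x\<in>K. x \<noteq> 0 \<longrightarrow> inverse x \<in> K)"

definition vecs :: "nat \<Rightarrow> (nat \<Rightarrow> 'a::zero) set" where
  "vecs n = {x. \<forall>i. i \<notin> {1..n} \<longrightarrow> x i = 0}"

definition prodset :: "nat \<Rightarrow> (nat \<Rightarrow> 'a::zero set) \<Rightarrow> (nat \<Rightarrow> 'a) set" where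
  "prodset n K = {x \<in> vecs n. \<forall>i\<in>{1..n}. x i \<in> K i}"

definition invertible_mat_n :: "nat \<Rightarrow> (nat \<Rightarrow> nat \<Rightarrow> 'a::field) \<Rightarrow> bool" where
  "invertible_mat_n n A \<longleftrightarrow> (\<exists>B. \<forall>i\<in>{1..n}. \<forall>k\<in>{1..n}.
      (\<Sum>l=1..n. A i l * B l k) = (if i = k then 1 else 0) \<and>
      (\<Sum>l=1..n. B i l * A l k) = (if i = k then 1 else 0))"

definition aff_map :: "nat \<Rightarrow> (nat \<Rightarrow> nat \<Rightarrow> 'a::field) \<Rightarrow> (nat \<Rightarrow> 'a) \<Rightarrow> (nat \<Rightarrow> 'a) \<Rightarrow> (nat \<Rightarrow> 'a)" where
  "aff_map n A \<beta> x = (\<lambda>i. if i \<in> {1..n} then (\<Sum>k=1..n. A i k * x k) + \<beta> i else 0)"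

text \<open>Polynomials of total degree at most 1 in F_q[X_1,...,X_n], represented exactly by
their coefficients: a pair (c, d) stands for c 1 X_1 + ... + c n X_n + d, with c zero
outside 1..n (so equality of pairs is equality of polynomials).\<close>
type_synonym 'a lin_poly = "(nat \<Rightarrow> 'a) \<times> 'a"

definition lin_poly :: "nat \<Rightarrow> (nat \<Rightarrow> 'a::zero) \<Rightarrow> 'a \<Rightarrow> 'a lin_poly" where
  "lin_poly n c d = ((\<lambda>k. if k \<in> {1..n} then c k else 0), d)"

text \<open>The polynomial X_j o psi = X_j(A X + beta) = sum_k A j k X_k + beta j.\<close>
definition var_comp :: "nat \<Rightarrow> nat \<Rightarrow> (nat \<Rightarrow> nat \<Rightarrow> 'a::field) \<Rightarrow> (nat \<Rightarrow> 'a) \<Rightarrow> 'a lin_poly" where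
  "var_comp n j A \<beta> = lin_poly n (\<lambda>k. A j k) (\<beta> j)"

text \<open>Existence of phi in Aff(X) with X_j o phi = p.  Since phi = psi restricted to X with
psi affine and psi(X) = X, and X_j o phi is defined via psi.\<close>
definition exists_aff_comp :: "nat \<Rightarrow> (nat \<Rightarrow> 'a::field set) \<Rightarrow> nat \<Rightarrow> 'a lin_poly \<Rightarrow> bool" where
  "exists_aff_comp n K j p \<longleftrightarrow> (\<exists>A \<beta>. invertible_mat_n n A \<and>
      aff_map n A \<beta> ` prodset n K = prodset n K \<and> var_comp n j A \<beta> = p)"

end

theory Submission
  imports Defs
begin

lemma sf_basic:
  assumes "is_subfield K"
  shows "0 \<in> K" "1 \<in> K" "a \<in> K \<Longrightarrow> b \<in> K \<Longrightarrow> a + b \<in> K"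
    "a \<in> K \<Longrightarrow> b \<in> K \<Longrightarrow> a * b \<in> K" "a \<in> K \<Longrightarrow> b \<in> K \<Longrightarrow> a - b \<in> K"
    "a \<in> K \<Longrightarrow> a \<noteq> 0 \<Longrightarrow> a * t \<in> K \<Longrightarrow> (t::'a::field) \<in> K"
proof -
  show "0 \<in> K" "1 \<in> K" using assms unfolding is_subfield_def by auto
  show "a \<in> K \<Longrightarrow> b \<in> K \<Longrightarrow> a + b \<in> K" "a \<in> K \<Longrightarrow> b \<in> K \<Longrightarrow> a * b \<in> K"
    using assms unfolding is_subfield_def by auto
  show "a \<in> K \<Longrightarrow> b \<in> K \<Longrightarrow> a - b \<in> K"
    using assms unfolding is_subfield_def by (metis diff_conv_add_uminus)
  assume "a \<in> K" "a \<noteq> 0" "a * t \<in> K"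
  then have "inverse a * (a * t) \<in> K" using assms unfolding is_subfield_def by auto
  then show "t \<in> K" using \<open>a \<noteq> 0\<close> by (simp add: mult.assoc[symmetric])
qed

lemma sf_sum:
  assumes "is_subfield K" "\<forall>k\<in>S. f k \<in> K"
  shows "sum f S \<in> K"
proof (cases "finite S")
  case True
  then show ?thesis using assms(2)
    by (induction S rule: finite_induct) (auto intro: sf_basic[OF assms(1)])
next
  case False
  then show ?thesis using sf_basic(1)[OF assms(1)] by simp
qed

lemma finite_vecs: "finite (vecs n :: (nat \<Rightarrow> 'a::{finite,zero}) set)"
proof -
  have "vecs n = {f::nat\<Rightarrow>'a. \<forall>x. (x \<in> {1..n} \<longrightarrow> f x \<in> UNIV) \<and> (x \<notin> {1..n} \<longrightarrow> f x = 0)}"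
    unfolding vecs_def by auto
  then show ?thesis using finite_set_of_finite_funs[of "{1..n}" "UNIV::'a set" 0] by simp
qed

lemma finite_prodset: "finite (prodset n K :: (nat \<Rightarrow> 'a::{finite,zero}) set)"
  using finite_vecs[of n] unfolding prodset_def by (rule rev_finite_subset) auto

lemma chain_mono:
  assumes chain: "\<forall>i. 1 \<le> i \<and> i < n \<longrightarrow> K i \<subseteq> K (Suc i)"
    and "1 \<le> i" "i \<le> k" "k \<le> n"
  shows "K i \<subseteq> K k"
  using assms(3,4)
proof (induction k rule: dec_induct)
  case base then show ?case by simp
next
  case (step m)
  then have "K i \<subseteq> K m" by simp
  moreover have "K m \<subseteq> K (Suc m)" using chain step assms(2) by simp
  ultimately show ?case by blast
qed

lemma fwd_entries:
  fixes K :: "nat \<Rightarrow> 'a::field set"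
  assumes subf: "\<forall>i\<in>{1..n}. is_subfield (K i)"
    and img: "aff_map n A \<beta> ` prodset n K = prodset n K"
    and i: "i \<in> {1..n}" and k: "k \<in> {1..n}"
  shows "\<beta> i \<in> K i" "A i k \<in> K i" "A i k \<noteq> 0 \<Longrightarrow> K k \<subseteq> K i"
proof -
  have mem: "aff_map n A \<beta> x \<in> prodset n K" if "x \<in> prodset n K" for x
    using img that by blast
  have getc: "y i \<in> K i" if "y \<in> prodset n K" for y
    using that i unfolding prodset_def by auto
  have e: "(\<lambda>l. if l = k then t else 0) \<in> prodset n K" if "t \<in> K k" for t
    using that subf k unfolding prodset_def vecs_def
    by (auto simp: sf_basic(1))
  have val: "aff_map n A \<beta> (\<lambda>l. if l = k then t else 0) i = A i k * t + \<beta> i" for t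
    using i k unfolding aff_map_def by (simp add: if_distrib cong: if_cong)
  have sfi: "is_subfield (K i)" using subf i by auto
  have sfk: "is_subfield (K k)" using subf k by auto
  have b: "\<beta> i \<in> K i"
    using getc[OF mem[OF e[OF sf_basic(1)[OF sfk]]]] val[of 0] by simp
  show "\<beta> i \<in> K i" by (rule b)
  have at: "A i k * t \<in> K i" if "t \<in> K k" for t
  proof -
    have "A i k * t + \<beta> i \<in> K i" using getc[OF mem[OF e[OF that]]] val[of t] by simp
    from sf_basic(5)[OF sfi this b] show ?thesis by simp
  qed
  show a: "A i k \<in> K i" using at[OF sf_basic(2)[OF sfk]] by simp
  show "K k \<subseteq> K i" if "A i k \<noteq> 0"
    using at sf_basic(6)[OF sfi a that] by blast
qed

lemma fwd_count:
  fixes K :: "nat \<Rightarrow> 'a::{field,finite} set"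
  assumes subf: "\<forall>i\<in>{1..n}. is_subfield (K i)"
    and img: "aff_map n A \<beta> ` prodset n K = prodset n K"
    and j: "j \<in> {1..n}"
    and rowj: "\<And>k. k \<in> {1..n} \<Longrightarrow> \<not> K j \<subseteq> K k \<or> A j k = 0"
  shows False
proof -
  define X where "X = prodset n K"
  define \<psi> where "\<psi> = aff_map n A \<beta>"
  define T where "T = {k\<in>{1..n}. K j \<subseteq> K k}"
  have jT: "j \<in> T" using j unfolding T_def by auto
  have zA: "A i k = 0" if "i \<in> {1..n}" "k \<in> T" "i \<notin> T \<or> i = j" for i k
  proof (cases "i = j")
    case True then show ?thesis using rowj that unfolding T_def by auto
  next
    case False
    then have "i \<notin> T" using that by auto
    show ?thesis
    proof (rule ccontr)
      assume "A i k \<noteq> 0"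
      then have "K k \<subseteq> K i" using fwd_entries(3)[OF subf img that(1)] that(2) unfolding T_def by auto
      then show False using that(1,2) \<open>i \<notin> T\<close> unfolding T_def by auto
    qed
  qed
  define g :: "(nat \<Rightarrow> 'a) \<Rightarrow> (nat \<Rightarrow> 'a)" where "g x = (\<lambda>k. if k \<in> T then 0 else x k)" for x
  define r :: "(nat \<Rightarrow> 'a) \<Rightarrow> (nat \<Rightarrow> 'a)" where "r y = (\<lambda>k. if k \<in> T - {j} then 0 else y k)" for y
  have key: "r (\<psi> x) = r (\<psi> (g x))" for x
  proof
    fix i
    show "r (\<psi> x) i = r (\<psi> (g x)) i"
    proof (cases "i \<in> {1..n} \<and> i \<notin> T - {j}")
      case True
      have "(\<Sum>k=1..n. A i k * x k) = (\<Sum>k=1..n. A i k * g x k)"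
      proof (rule sum.cong)
        fix k assume "k \<in> {1..n}"
        show "A i k * x k = A i k * g x k"
          using zA[of i k] True unfolding g_def by auto
      qed simp
      then show ?thesis using True unfolding r_def \<psi>_def aff_map_def by auto
    next
      case False
      then show ?thesis unfolding r_def \<psi>_def aff_map_def by auto
    qed
  qed
  have gX: "g x \<in> X" if "x \<in> X" for x
    using that subf unfolding X_def prodset_def vecs_def g_def by (auto simp: sf_basic(1))
  have rg: "r (g x) = g x" for x unfolding r_def g_def by auto
  have finX: "finite X" unfolding X_def by (rule finite_prodset)
  have "r ` X = r ` (\<psi> ` X)" using img unfolding X_def \<psi>_def by simp
  also have "\<dots> = (\<lambda>x. r (\<psi> x)) ` (g ` X)"
  proof -
    have "r ` (\<psi> ` X) = (\<lambda>x. r (\<psi> (g x))) ` X" using key by (auto simp: image_iff)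
    also have "\<dots> = (\<lambda>x. r (\<psi> x)) ` (g ` X)" by (simp add: image_image)
    finally show ?thesis .
  qed
  finally have eq: "r ` X = (\<lambda>x. r (\<psi> x)) ` (g ` X)" .
  have le: "card (r ` X) \<le> card (g ` X)" unfolding eq
    by (rule card_image_le) (use finX in simp)
  define e :: "nat \<Rightarrow> 'a" where "e = (\<lambda>k. if k = j then 1 else 0)"
  have eX: "e \<in> X" using j subf unfolding X_def prodset_def vecs_def e_def
    by (auto simp: sf_basic(1,2))
  have re: "r e = e" unfolding r_def e_def by auto
  have sub: "g ` X \<subset> r ` X"
  proof
    show "g ` X \<subseteq> r ` X" using gX rg by (metis image_subsetI rev_image_eqI)
    have "e \<notin> g ` X" using jT unfolding g_def e_def by (auto simp: fun_eq_iff) (metis zero_neq_one)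
    moreover have "e \<in> r ` X" using eX re by (metis rev_image_eqI)
    ultimately show "g ` X \<noteq> r ` X" by blast
  qed
  have "card (g ` X) < card (r ` X)" by (rule psubset_card_mono) (use finX sub in auto)
  then show False using le by simp
qed


lemma recover:
  fixes A B :: "nat \<Rightarrow> nat \<Rightarrow> 'a::field"
  assumes inv: "\<forall>i\<in>{1..n}. \<forall>k\<in>{1..n}. (\<Sum>l=1..n. B i l * A l k) = (if i = k then 1 else 0)"
    and m: "m \<in> {1..n}"
  shows "x m = (\<Sum>l=1..n. B m l * (\<Sum>k=1..n. A l k * x k))"
proof -
  have "(\<Sum>l=1..n. B m l * (\<Sum>k=1..n. A l k * x k)) = (\<Sum>l=1..n. \<Sum>k=1..n. B m l * A l k * x k)"
    by (simp add: sum_distrib_left mult.assoc)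
  also have "\<dots> = (\<Sum>k=1..n. \<Sum>l=1..n. B m l * A l k * x k)" by (rule sum.swap)
  also have "\<dots> = (\<Sum>k=1..n. (\<Sum>l=1..n. B m l * A l k) * x k)" by (simp add: sum_distrib_right)
  also have "\<dots> = (\<Sum>k=1..n. (if m = k then 1 else 0) * x k)"
    by (rule sum.cong) (use inv m in auto)
  also have "\<dots> = (\<Sum>k=1..n. if m = k then x k else 0)" by (rule sum.cong) auto
  also have "\<dots> = x m" using m by (simp add: sum.delta)
  finally show ?thesis by simp
qed

lemma inj_aff:
  fixes A B :: "nat \<Rightarrow> nat \<Rightarrow> 'a::field"
  assumes inv: "\<forall>i\<in>{1..n}. \<forall>k\<in>{1..n}. (\<Sum>l=1..n. B i l * A l k) = (if i = k then 1 else 0)"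
  shows "inj_on (aff_map n A \<beta>) (vecs n)"
proof
  fix x y assume x: "x \<in> vecs n" and y: "y \<in> vecs n" and eq: "aff_map n A \<beta> x = aff_map n A \<beta> y"
  have s: "(\<Sum>k=1..n. A l k * x k) = (\<Sum>k=1..n. A l k * y k)" if "l \<in> {1..n}" for l
    using fun_cong[OF eq, of l] that unfolding aff_map_def by simp
  show "x = y"
  proof
    fix m show "x m = y m"
    proof (cases "m \<in> {1..n}")
      case True
      then show ?thesis using recover[OF inv True, of x] recover[OF inv True, of y] s
        by (metis (no_types, lifting) sum.cong)
    next
      case False then show ?thesis using x y unfolding vecs_def by auto
    qed
  qed
qed

definition sw :: "nat \<Rightarrow> nat \<Rightarrow> nat \<Rightarrow> nat" where
  "sw h j i = (if i = h then j else if i = j then h else i)"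

lemma sw_sw[simp]: "sw h j (sw h j i) = i" unfolding sw_def by auto
lemma sw_eq_iff: "sw h j a = b \<longleftrightarrow> a = sw h j b" unfolding sw_def by auto
lemma sw_mem: "h \<in> S \<Longrightarrow> j \<in> S \<Longrightarrow> i \<in> S \<Longrightarrow> sw h j i \<in> S" unfolding sw_def by auto
lemma sw_h[simp]: "sw h j i = h \<longleftrightarrow> i = j" unfolding sw_def by auto
lemma sw_j[simp]: "sw h j i = j \<longleftrightarrow> i = h" unfolding sw_def by auto


definition cc :: "nat \<Rightarrow> (nat \<Rightarrow> 'a::field) \<Rightarrow> nat \<Rightarrow> 'a" where
  "cc h \<gamma> k = (if k \<le> h then \<gamma> k else 0)"

definition cA :: "nat \<Rightarrow> nat \<Rightarrow> (nat \<Rightarrow> 'a::field) \<Rightarrow> nat \<Rightarrow> nat \<Rightarrow> 'a" where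
  "cA h j \<gamma> i k = (if i = j then cc h \<gamma> k else if sw h j i = k then 1 else 0)"

definition cB :: "nat \<Rightarrow> nat \<Rightarrow> (nat \<Rightarrow> 'a::field) \<Rightarrow> nat \<Rightarrow> nat \<Rightarrow> 'a" where
  "cB h j \<gamma> m l = (if m = h then (if l = j then 1 / \<gamma> h else - cc h \<gamma> (sw h j l) / \<gamma> h)
      else if sw h j m = l then 1 else 0)"

lemma sum_sel:
  assumes "finite S"
  shows "(\<Sum>l\<in>S. (if a = l then 1 else 0) * f l) = (if a \<in> S then f a else (0::'a::field))"
proof -
  have "(\<Sum>l\<in>S. (if a = l then 1 else 0) * f l) = (\<Sum>l\<in>S. if a = l then f l else 0)"
    by (rule sum.cong) auto
  then show ?thesis using assms by (simp add: sum.delta)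
qed

lemma sum_sel':
  assumes "finite S"
  shows "(\<Sum>l\<in>S. f l * (if sw h j l = k then 1 else 0)) = (if sw h j k \<in> S then f (sw h j k) else (0::'a::field))"
proof -
  have "(\<Sum>l\<in>S. f l * (if sw h j l = k then 1 else 0)) = (\<Sum>l\<in>S. if sw h j k = l then f l else 0)"
    by (rule sum.cong) (auto simp: sw_eq_iff)
  then show ?thesis using assms by (simp add: sum.delta)
qed

lemma cAB:
  fixes \<gamma> :: "nat \<Rightarrow> 'a::field"
  assumes hn: "h \<in> {1..n}" and jn: "j \<in> {1..n}" and gh: "\<gamma> h \<noteq> 0"
    and i: "i \<in> {1..n}" and k: "k \<in> {1..n}"
  shows "(\<Sum>l=1..n. cA h j \<gamma> i l * cB h j \<gamma> l k) = (if i = k then 1 else 0)"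
    "(\<Sum>l=1..n. cB h j \<gamma> i l * cA h j \<gamma> l k) = (if i = k then 1 else 0)"
proof -
  let ?S = "{1..n::nat}"
  have chh: "cc h \<gamma> h = \<gamma> h" unfolding cc_def by simp
  show "(\<Sum>l=1..n. cA h j \<gamma> i l * cB h j \<gamma> l k) = (if i = k then 1 else 0)"
  proof (cases "i = j")
    case False
    then have "(\<Sum>l=1..n. cA h j \<gamma> i l * cB h j \<gamma> l k) = (\<Sum>l=1..n. (if sw h j i = l then 1 else 0) * cB h j \<gamma> l k)"
      unfolding cA_def by simp
    also have "\<dots> = cB h j \<gamma> (sw h j i) k" using sw_mem[OF hn jn i] by (subst sum_sel) auto
    also have "\<dots> = (if i = k then 1 else 0)" using False unfolding cB_def by (auto simp: sw_eq_iff)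
    finally show ?thesis .
  next
    case True
    have "(\<Sum>l=1..n. cA h j \<gamma> i l * cB h j \<gamma> l k) = (\<Sum>l\<in>?S. cc h \<gamma> l * cB h j \<gamma> l k)"
      unfolding cA_def using True by simp
    also have "\<dots> = cc h \<gamma> h * cB h j \<gamma> h k + (\<Sum>l\<in>?S - {h}. cc h \<gamma> l * cB h j \<gamma> l k)"
      using hn by (subst sum.remove[of _ h]) auto
    also have "(\<Sum>l\<in>?S - {h}. cc h \<gamma> l * cB h j \<gamma> l k) = (\<Sum>l\<in>?S - {h}. cc h \<gamma> l * (if sw h j l = k then 1 else 0))"
      by (rule sum.cong) (auto simp: cB_def)
    also have "\<dots> = (if sw h j k \<in> ?S - {h} then cc h \<gamma> (sw h j k) else 0)" by (rule sum_sel') simp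
    finally show ?thesis using True chh gh sw_mem[OF hn jn k] unfolding cB_def by (auto simp: field_simps)
  qed
  show "(\<Sum>l=1..n. cB h j \<gamma> i l * cA h j \<gamma> l k) = (if i = k then 1 else 0)"
  proof (cases "i = h")
    case False
    then have "(\<Sum>l=1..n. cB h j \<gamma> i l * cA h j \<gamma> l k) = (\<Sum>l=1..n. (if sw h j i = l then 1 else 0) * cA h j \<gamma> l k)"
      unfolding cB_def by simp
    also have "\<dots> = cA h j \<gamma> (sw h j i) k" using sw_mem[OF hn jn i] by (subst sum_sel) auto
    also have "\<dots> = (if i = k then 1 else 0)" using False unfolding cA_def by (auto simp: sw_eq_iff)
    finally show ?thesis .
  next
    case True
    have "(\<Sum>l=1..n. cB h j \<gamma> i l * cA h j \<gamma> l k) = cB h j \<gamma> h j * cA h j \<gamma> j k + (\<Sum>l\<in>?S - {j}. cB h j \<gamma> h l * cA h j \<gamma> l k)"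
      using jn True by (subst sum.remove[of _ j]) auto
    also have "(\<Sum>l\<in>?S - {j}. cB h j \<gamma> h l * cA h j \<gamma> l k) = (\<Sum>l\<in>?S - {j}. (- cc h \<gamma> (sw h j l) / \<gamma> h) * (if sw h j l = k then 1 else 0))"
      by (rule sum.cong) (auto simp: cB_def cA_def)
    also have "\<dots> = (if sw h j k \<in> ?S - {j} then - cc h \<gamma> (sw h j (sw h j k)) / \<gamma> h else 0)" by (rule sum_sel') simp
    finally show ?thesis using True chh gh sw_mem[OF hn jn k] unfolding cB_def cA_def by (auto simp: field_simps)
  qed
qed


theorem mainTheorem8:
  fixes K :: "nat \<Rightarrow> 'a::{field,finite} set"
    and n h j :: nat and \<gamma> :: "nat \<Rightarrow> 'a" and \<eta> :: 'a
  assumes subf: "\<forall>i\<in>{1..n}. is_subfield (K i)"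
    and chain: "\<forall>i. 1 \<le> i \<and> i < n \<longrightarrow> K i \<subseteq> K (Suc i)"
    and h: "1 \<le> h" "h \<le> n"
    and gh: "\<gamma> h \<noteq> 0"
    and j: "j \<in> {1..n}"
  shows "exists_aff_comp n K j (lin_poly n (\<lambda>k. if k \<le> h then \<gamma> k else 0) \<eta>)
     \<longleftrightarrow> (\<forall>i\<in>{1..h}. \<gamma> i \<in> K j) \<and> \<eta> \<in> K j \<and> K h = K j"
proof
  assume "exists_aff_comp n K j (lin_poly n (\<lambda>k. if k \<le> h then \<gamma> k else 0) \<eta>)"
  then obtain A \<beta> where img: "aff_map n A \<beta> ` prodset n K = prodset n K"
    and vc: "var_comp n j A \<beta> = lin_poly n (\<lambda>k. if k \<le> h then \<gamma> k else 0) \<eta>"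
    unfolding exists_aff_comp_def by blast
  have Aj: "A j k = (if k \<le> h then \<gamma> k else 0)" if "k \<in> {1..n}" for k
    using fun_cong[OF arg_cong[OF vc, of fst], of k] that unfolding var_comp_def lin_poly_def by simp
  have bj: "\<beta> j = \<eta>" using arg_cong[OF vc, of snd] unfolding var_comp_def lin_poly_def by simp
  have hn: "h \<in> {1..n}" using h by simp
  have g1: "\<forall>i\<in>{1..h}. \<gamma> i \<in> K j"
  proof
    fix i assume "i \<in> {1..h}"
    then have "i \<in> {1..n}" "i \<le> h" using h by auto
    then show "\<gamma> i \<in> K j" using fwd_entries(2)[OF subf img j \<open>i \<in> {1..n}\<close>] Aj by simp
  qed
  have e1: "\<eta> \<in> K j" using fwd_entries(1)[OF subf img j j] bj by simp
  have s1: "K h \<subseteq> K j" using fwd_entries(3)[OF subf img j hn] Aj[OF hn] gh by simp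
  have s2: "K j \<subseteq> K h"
  proof (rule ccontr)
    assume nj: "\<not> K j \<subseteq> K h"
    show False
    proof (rule fwd_count[OF subf img j])
      fix k assume k: "k \<in> {1..n}"
      show "\<not> K j \<subseteq> K k \<or> A j k = 0"
      proof (cases "k \<le> h")
        case True
        then have "K k \<subseteq> K h" using chain_mono[OF chain, of k h] k h by auto
        then show ?thesis using nj by blast
      qed (use Aj k in simp)
    qed
  qed
  show "(\<forall>i\<in>{1..h}. \<gamma> i \<in> K j) \<and> \<eta> \<in> K j \<and> K h = K j" using g1 e1 s1 s2 by blast
next
  assume asm: "(\<forall>i\<in>{1..h}. \<gamma> i \<in> K j) \<and> \<eta> \<in> K j \<and> K h = K j"
  have hn: "h \<in> {1..n}" using h by simp
  define A where "A = cA h j \<gamma>"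
  define \<beta> :: "nat \<Rightarrow> 'a" where "\<beta> = (\<lambda>i. if i = j then \<eta> else 0)"
  define X where "X = prodset n K"
  have inv: "invertible_mat_n n A"
    unfolding invertible_mat_n_def A_def using cAB[of h n j \<gamma>, OF hn j gh] by blast
  have inj: "inj_on (aff_map n A \<beta>) X"
  proof (rule inj_on_subset[OF inj_aff])
    show "\<forall>i\<in>{1..n}. \<forall>k\<in>{1..n}. (\<Sum>l = 1..n. cB h j \<gamma> i l * A l k) = (if i = k then 1 else 0)"
      unfolding A_def using cAB(2)[of h n j \<gamma>, OF hn j gh] by blast
    show "X \<subseteq> vecs n" unfolding X_def prodset_def by auto
  qed
  have sub: "aff_map n A \<beta> ` X \<subseteq> X"
  proof
    fix y assume "y \<in> aff_map n A \<beta> ` X"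
    then obtain x where x: "x \<in> X" and y: "y = aff_map n A \<beta> x" by blast
    have xK: "x k \<in> K k" if "k \<in> {1..n}" for k using x that unfolding X_def prodset_def by auto
    have "y i \<in> K i" if i: "i \<in> {1..n}" for i
    proof (cases "i = j")
      case False
      have "(\<Sum>k=1..n. A i k * x k) = (\<Sum>k=1..n. (if sw h j i = k then 1 else 0) * x k)"
        unfolding A_def cA_def using False by simp
      also have "\<dots> = x (sw h j i)" using sw_mem[OF hn j i] by (subst sum_sel) auto
      finally have "y i = x (sw h j i)" using y i False unfolding aff_map_def \<beta>_def by simp
      moreover have "x (sw h j i) \<in> K i"
        using xK[OF sw_mem[OF hn j i]] asm False unfolding sw_def by auto
      ultimately show ?thesis by simp
    next
      case True
      have sfj: "is_subfield (K j)" using subf j by auto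
      have "(\<Sum>k=1..n. A i k * x k) \<in> K j"
      proof (rule sf_sum[OF sfj], rule ballI)
        fix k assume k: "k \<in> {1..n}"
        show "A i k * x k \<in> K j"
        proof (cases "k \<le> h")
          case True
          have "x k \<in> K j" using xK[OF k] chain_mono[OF chain, of k h] k h asm True by auto
          moreover have "\<gamma> k \<in> K j" using asm k True by auto
          ultimately show ?thesis using \<open>i = j\<close> True sf_basic(4)[OF sfj]
            unfolding A_def cA_def cc_def by simp
        next
          case False
          then show ?thesis using \<open>i = j\<close> sf_basic(1)[OF sfj] unfolding A_def cA_def cc_def by simp
        qed
      qed
      then have "y i \<in> K j" using y i True asm sf_basic(3)[OF sfj] unfolding aff_map_def \<beta>_def by simp
      then show ?thesis using True by simp
    qed
    moreover have "y \<in> vecs n" using y unfolding vecs_def aff_map_def by auto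
    ultimately show "y \<in> X" unfolding X_def prodset_def by auto
  qed
  have img: "aff_map n A \<beta> ` X = X"
    by (rule endo_inj_surj[OF _ sub inj]) (simp add: X_def finite_prodset)
  have vc: "var_comp n j A \<beta> = lin_poly n (\<lambda>k. if k \<le> h then \<gamma> k else 0) \<eta>"
    unfolding var_comp_def A_def cA_def cc_def \<beta>_def by simp
  show "exists_aff_comp n K j (lin_poly n (\<lambda>k. if k \<le> h then \<gamma> k else 0) \<eta>)"
    unfolding exists_aff_comp_def using inv img vc unfolding X_def by blast
qed

end
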